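(* Let $G$ be a simple undirected graph on $n$ vertices, and let $\delta$ be the minimum vertex degree over all graphs in the LC orbit of $G$. Then $$Q(G,4)\le \frac{\gamma(\delta+1)+6^n}{2^n},\qquad\text{where}\qquad \gamma(d)=\sum_{t=0}^{n}\binom{n}{t}2^{t}\left(\sum_{k=\max(1,\,d+t-n)}^{t}\binom{t}{k}2^{\,n-k}\right).$$
   Context: All graphs are finite, simple and undirected. For a vertex $u$, $G\setminus u$ denotes $G$ with $u$ and all its incident edges removed. For a vertex $v$ with neighbourhood $N_v$ (the set of vertices adjacent to $v$), local complementation (LC) on $v$ transforms $G$ into $G*v$ by replacing the induced subgraph of $G$ on $N_v$ by its complement. For an edge $\{u,v\}$, edge local complementation is $G^{(uv)}=G*u*v*u$. The LC orbit of $G$ is the set of all graphs (up to isomorphism) obtainable from $G$ by any finite sequence of LC operations. The interlace polynomial $Q(G)=Q(G,x)$ is defined recursively: for the edgeless graph $E_n$ on $n$ vertices, $Q(E_n)=x^n$; for any other graph $G$, choose any edge $\{u,v\}$ and set $Q(G)=Q(G\setminus u)+Q(G^{(uv)}\setminus u)+Q((G*u)\setminus u)$ (this is independent of the choice of edge). *)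

theory Defs
  imports "HOL-Computational_Algebra.Polynomial"
begin

type_synonym 'a graph = "'a set \<times> 'a set set"

definition simple_graph :: "'a graph \<Rightarrow> bool" where
  "simple_graph G \<longleftrightarrow> finite (fst G) \<and> (\<forall>e\<in>snd G. e \<subseteq> fst G \<and> card e = 2)"

definition nbhd :: "'a graph \<Rightarrow> 'a \<Rightarrow> 'a set" where
  "nbhd G v = {u. {u, v} \<in> snd G}"

definition degree :: "'a graph \<Rightarrow> 'a \<Rightarrow> nat" where
  "degree G v = card (nbhd G v)"

definition lc :: "'a \<Rightarrow> 'a graph \<Rightarrow> 'a graph" where
  "lc v G = (fst G,
     (snd G - {{a, b} | a b. a \<in> nbhd G v \<and> b \<in> nbhd G v \<and> a \<noteq> b})
     \<union> ({{a, b} | a b. a \<in> nbhd G v \<and> b \<in> nbhd G v \<and> a \<noteq> b} - snd G))"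

definition elc :: "'a \<Rightarrow> 'a \<Rightarrow> 'a graph \<Rightarrow> 'a graph" where
  "elc u v G = lc u (lc v (lc u G))"

definition del :: "'a \<Rightarrow> 'a graph \<Rightarrow> 'a graph" where
  "del u G = (fst G - {u}, {e \<in> snd G. u \<notin> e})"

text \<open>LC orbit (as labelled graphs; isomorphic copies do not affect vertex degrees).\<close>
definition lc_step :: "'a graph \<Rightarrow> 'a graph \<Rightarrow> bool" where
  "lc_step G H \<longleftrightarrow> (\<exists>v\<in>fst G. H = lc v G)"

definition lc_orbit :: "'a graph \<Rightarrow> 'a graph set" where
  "lc_orbit G = {H. lc_step\<^sup>*\<^sup>* G H}"

definition min_orbit_degree :: "'a graph \<Rightarrow> nat" where
  "min_orbit_degree G = Min {degree H v | H v. H \<in> lc_orbit G \<and> v \<in> fst H}"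

text \<open>Interlace polynomial, via the recursion with an arbitrarily chosen edge
(the recursion is independent of the choice). The fuel argument is the number of
vertices, which decreases by one in each recursive call.\<close>
primrec Qf :: "nat \<Rightarrow> 'a graph \<Rightarrow> real poly" where
  "Qf 0 G = [:0, 1:] ^ card (fst G)"
| "Qf (Suc n) G =
     (if snd G = {} then [:0, 1:] ^ card (fst G)
      else (let (u, v) = (SOME (u, v). u \<noteq> v \<and> {u, v} \<in> snd G) in
            Qf n (del u G) + Qf n (del u (elc u v G)) + Qf n (del u (lc u G))))"

definition interlace :: "'a graph \<Rightarrow> real poly" where
  "interlace G = Qf (card (fst G)) G"

text \<open>gamma(d) from the statement; for natural numbers, max 1 (d + t - n) with truncated
subtraction equals max(1, d+t-n) over the integers.\<close>
definition gamma :: "nat \<Rightarrow> nat \<Rightarrow> real" where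
  "gamma n d = (\<Sum>t=0..n. real (n choose t) * 2 ^ t *
      (\<Sum>k = max 1 (d + t - n)..t. real (t choose k) * 2 ^ (n - k)))"

end

theory Submission
  imports Defs
begin



lemma nbhd_lc: "nbhd (lc w H) i = (if i \<in> nbhd H w then (nbhd H i - (nbhd H w - {i})) \<union> ((nbhd H w - {i}) - nbhd H i) else nbhd H i)"
proof -
  define P where "P = {{a, b} | a b. a \<in> nbhd H w \<and> b \<in> nbhd H w \<and> a \<noteq> b}"
  have sd: "snd (lc w H) = (snd H - P) \<union> (P - snd H)" unfolding lc_def P_def by simp
  have key: "{x, i} \<in> P \<longleftrightarrow> x \<noteq> i \<and> x \<in> nbhd H w \<and> i \<in> nbhd H w" for x
    unfolding P_def by (auto simp: doubleton_eq_iff)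
  show ?thesis unfolding nbhd_def sd using key[unfolded nbhd_def] by auto
qed

lemma fst_lc[simp]: "fst (lc w H) = fst H" by (simp add: lc_def)
lemma fst_elc[simp]: "fst (elc u v H) = fst H" by (simp add: elc_def)
lemma fst_del[simp]: "fst (del u H) = fst H - {u}" by (simp add: del_def)

lemma nbhd_sym: "x \<in> nbhd H y \<longleftrightarrow> y \<in> nbhd H x"
  by (simp add: nbhd_def insert_commute)

lemma simple_nbhd: "simple_graph H \<Longrightarrow> nbhd H x \<subseteq> fst H"
  unfolding simple_graph_def nbhd_def by auto

lemma simple_not_self: "simple_graph H \<Longrightarrow> x \<notin> nbhd H x"
  unfolding simple_graph_def nbhd_def by fastforce

lemma simple_finite_nbhd: "simple_graph H \<Longrightarrow> finite (nbhd H x)"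
  using simple_nbhd simple_graph_def finite_subset by metis

lemma simple_lc: assumes "simple_graph H" shows "simple_graph (lc w H)"
proof -
  have "nbhd H w \<subseteq> fst H" using simple_nbhd[OF assms] .
  then show ?thesis using assms unfolding simple_graph_def lc_def
    by (auto simp: card_insert_if)
qed

lemma simple_del: assumes "simple_graph H" shows "simple_graph (del u H)"
  using assms unfolding simple_graph_def del_def by auto

lemma simple_elc: "simple_graph H \<Longrightarrow> simple_graph (elc u v H)"
  unfolding elc_def by (intro simple_lc)

lemma nbhd_del: "nbhd (del u H) i = (if i = u then {} else nbhd H i - {u})"
  unfolding nbhd_def del_def by auto




definition par :: "'a graph \<Rightarrow> 'a set \<Rightarrow> 'a \<Rightarrow> bool" where
  "par H K i \<longleftrightarrow> odd (card (nbhd H i \<inter> K))"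

definition tog :: "'a \<Rightarrow> 'a set \<Rightarrow> 'a set" where
  "tog w K = (if w \<in> K then K - {w} else insert w K)"

definition T :: "'a graph \<Rightarrow> 'a \<Rightarrow> 'a set \<Rightarrow> 'a set" where
  "T H w K = (if par H K w then tog w K else K)"

definition supp :: "'a graph \<Rightarrow> 'a set \<Rightarrow> 'a set" where
  "supp H K = {i \<in> fst H. i \<in> K \<or> par H K i}"

lemma odd_card_Un_diff:
  assumes "finite A" "finite B"
  shows "odd (card ((A - B) \<union> (B - A))) \<longleftrightarrow> (odd (card A) \<noteq> odd (card B))"
proof -
  have "card ((A - B) \<union> (B - A)) = card (A - B) + card (B - A)"
    by (rule card_Un_disjoint) (use assms in auto)
  moreover have "card (A - B) = card A - card (A \<inter> B)" using assms
    by (simp add: card_Diff_subset_Int)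
  moreover have "card (B - A) = card B - card (B \<inter> A)" using assms
    by (simp add: card_Diff_subset_Int)
  moreover have "B \<inter> A = A \<inter> B" by blast
  moreover have "card (A \<inter> B) \<le> card A" "card (A \<inter> B) \<le> card B"
    using assms by (auto intro: card_mono)
  ultimately show ?thesis by auto
qed

lemma par_tog:
  assumes "finite N"
  shows "odd (card (N \<inter> tog w K)) \<longleftrightarrow> (odd (card (N \<inter> K)) \<noteq> (w \<in> N))"
proof (cases "w \<in> N")
  case True
  show ?thesis
  proof (cases "w \<in> K")
    case True
    then have e: "N \<inter> tog w K = (N \<inter> K) - {w}" by (auto simp: tog_def)
    have f: "finite (N \<inter> K)" using assms by simp
    have w: "w \<in> N \<inter> K" using \<open>w \<in> N\<close> True by simp
    have "card (N \<inter> K) = Suc (card ((N \<inter> K) - {w}))"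
      using card.remove[OF f w] .
    then show ?thesis unfolding e using \<open>w \<in> N\<close> by simp
  next
    case False
    then have "N \<inter> tog w K = insert w (N \<inter> K)" using \<open>w \<in> N\<close> by (auto simp: tog_def)
    then show ?thesis using \<open>w \<in> N\<close> False assms by simp
  qed
next
  case False
  then have "N \<inter> tog w K = N \<inter> K" by (auto simp: tog_def)
  then show ?thesis using False by simp
qed




lemma odd_card_remove:
  assumes "finite N"
  shows "odd (card ((N - {i}) \<inter> K)) \<longleftrightarrow> (odd (card (N \<inter> K)) \<noteq> (i \<in> N \<and> i \<in> K))"
proof (cases "i \<in> N \<and> i \<in> K")
  case True
  have f: "finite (N \<inter> K)" using assms by simp
  have w: "i \<in> N \<inter> K" using True by simp
  have e: "(N - {i}) \<inter> K = (N \<inter> K) - {i}" by auto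
  have "card (N \<inter> K) = Suc (card ((N \<inter> K) - {i}))"
    using card.remove[OF f w] .
  then show ?thesis unfolding e using True by simp
next
  case False
  then have "(N - {i}) \<inter> K = N \<inter> K" by auto
  then show ?thesis using False by simp
qed

lemma par_T_w:
  assumes "simple_graph H"
  shows "par H (T H w K) w = par H K w"
proof -
  have "w \<notin> nbhd H w" using simple_not_self[OF assms] .
  then have "odd (card (nbhd H w \<inter> tog w K)) = par H K w"
    using par_tog[OF simple_finite_nbhd[OF assms], where w=w and K=K] unfolding par_def by simp
  then show ?thesis unfolding T_def par_def by simp
qed

lemma mem_T: "i \<noteq> w \<Longrightarrow> i \<in> T H w K \<longleftrightarrow> i \<in> K"
  unfolding T_def tog_def by auto

lemma mem_T_w: "w \<in> T H w K \<longleftrightarrow> ((w \<in> K) \<noteq> par H K w)"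
  unfolding T_def tog_def by auto

lemma par_lc_w:
  assumes "simple_graph H"
  shows "par (lc w H) (T H w K) w = par H K w"
proof -
  have "nbhd (lc w H) w = nbhd H w" using simple_not_self[OF assms] by (simp add: nbhd_lc)
  then show ?thesis using par_T_w[OF assms] unfolding par_def by simp
qed

lemma par_lc_other:
  assumes "simple_graph H" "i \<notin> nbhd H w" "i \<noteq> w"
  shows "par (lc w H) (T H w K) i = par H K i"
proof -
  have "nbhd (lc w H) i = nbhd H i" using assms by (simp add: nbhd_lc)
  moreover have "w \<notin> nbhd H i" using assms(2) nbhd_sym by metis
  moreover have "odd (card (nbhd H i \<inter> tog w K)) = par H K i"
    using par_tog[OF simple_finite_nbhd[OF assms(1)], where w=w and K=K] \<open>w \<notin> nbhd H i\<close>
    unfolding par_def by simp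
  ultimately show ?thesis unfolding par_def T_def by simp
qed

lemma par_lc_nb:
  assumes "simple_graph H" "i \<in> nbhd H w"
  shows "par (lc w H) (T H w K) i = (par H K i \<noteq> (i \<in> K))"
proof -
  let ?A = "nbhd H i" and ?B = "nbhd H w - {i}" and ?K = "T H w K"
  have fA: "finite ?A" "finite (nbhd H w)" using simple_finite_nbhd[OF assms(1)] by auto
  have e0: "nbhd (lc w H) i = sym_diff ?A ?B" using assms(2) by (simp add: nbhd_lc)
  have e: "nbhd (lc w H) i \<inter> ?K = sym_diff (?A \<inter> ?K) (?B \<inter> ?K)"
    unfolding e0 by blast
  have 1: "par (lc w H) ?K i = (odd (card (?A \<inter> ?K)) \<noteq> odd (card (?B \<inter> ?K)))"
    unfolding par_def e by (rule odd_card_Un_diff) (use fA in auto)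
  have wA: "w \<in> ?A" using assms(2) nbhd_sym by metis
  have wB: "w \<notin> nbhd H w" using simple_not_self[OF assms(1)] .
  have iw: "i \<noteq> w" using assms simple_not_self by metis
  have 2: "odd (card (?A \<inter> ?K)) = (par H K i \<noteq> par H K w)"
    unfolding T_def par_def using par_tog[OF fA(1), where w=w and K=K] wA by auto
  have 3: "?B \<inter> ?K = ?B \<inter> K" using wB iw unfolding T_def tog_def by auto
  have 4: "odd (card (?B \<inter> K)) = (par H K w \<noteq> (i \<in> K))"
    unfolding par_def using odd_card_remove[OF fA(2), of i K] assms(2) by auto
  show ?thesis using 1 2 3 4 by auto
qed

lemma T_subset: "K \<subseteq> fst H \<Longrightarrow> w \<in> fst H \<Longrightarrow> T H w K \<subseteq> fst H"
  unfolding T_def tog_def by auto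

lemma supp_lc:
  assumes "simple_graph H" "w \<in> fst H"
  shows "supp (lc w H) (T H w K) = supp H K"
proof -
  have "(i \<in> T H w K \<or> par (lc w H) (T H w K) i) \<longleftrightarrow> (i \<in> K \<or> par H K i)" for i
  proof (cases "i = w")
    case True then show ?thesis using par_lc_w[OF assms(1)] mem_T_w by metis
  next
    case False
    show ?thesis
    proof (cases "i \<in> nbhd H w")
      case True
      then show ?thesis using par_lc_nb[OF assms(1) True] mem_T[OF False] by auto
    next
      case nb: False
      then show ?thesis using par_lc_other[OF assms(1) nb False] mem_T[OF False] by auto
    qed
  qed
  then show ?thesis unfolding supp_def by simp
qed

lemma T_inj: assumes "simple_graph H" shows "inj_on (T H w) UNIV"
proof
  fix K L assume "T H w K = T H w L"
  then have p: "par H K w = par H L w" using par_T_w[OF assms] by metis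
  show "K = L"
  proof (cases "par H K w")
    case True
    then have "tog w K = tog w L" using p \<open>T H w K = T H w L\<close> unfolding T_def by simp
    then show ?thesis unfolding tog_def by (auto split: if_splits)
  next
    case False
    then show ?thesis using p \<open>T H w K = T H w L\<close> unfolding T_def by simp
  qed
qed




definition Z :: "'a graph \<Rightarrow> 'a set \<Rightarrow> 'a set" where
  "Z H K = fst H - supp H K"

definition Fv :: "'a graph \<Rightarrow> real" where
  "Fv H = (\<Sum>K\<in>Pow (fst H). 3 ^ card (Z H K))"

lemma Z_del:
  assumes "L \<subseteq> fst H - {u}"
  shows "Z (del u H) L = Z H L - {u}"
proof -
  have "par (del u H) L i = par H L i" if "i \<noteq> u" for i
  proof -
    have "nbhd (del u H) i \<inter> L = nbhd H i \<inter> L" using that assms by (auto simp: nbhd_del)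
    then show ?thesis unfolding par_def by simp
  qed
  then show ?thesis unfolding Z_def supp_def by auto
qed

lemma mem_Z: "i \<in> Z H K \<longleftrightarrow> i \<in> fst H \<and> i \<notin> K \<and> \<not> par H K i"
  unfolding Z_def supp_def by auto

lemma Z_lc:
  assumes "simple_graph H" "w \<in> fst H"
  shows "Z (lc w H) (T H w K) = Z H K"
  unfolding Z_def using supp_lc[OF assms] by simp

lemma T_Pow_bij:
  assumes "simple_graph H" "w \<in> fst H"
  shows "T H w ` Pow (fst H) = Pow (fst H)" "inj_on (T H w) (Pow (fst H))"
proof -
  show i: "inj_on (T H w) (Pow (fst H))" using inj_on_subset[OF T_inj[OF assms(1)], of "Pow (fst H)"] by blast
  have "T H w ` Pow (fst H) \<subseteq> Pow (fst H)" by (intro image_subsetI) (simp add: T_subset assms(2))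
  then show "T H w ` Pow (fst H) = Pow (fst H)"
    using endo_inj_surj[OF _ _ i] assms(1) unfolding simple_graph_def by auto
qed

lemma nbhd_lc_self: "simple_graph H \<Longrightarrow> nbhd (lc w H) w = nbhd H w"
  using simple_not_self[of H w] by (simp add: nbhd_lc)




lemma Fv_split:
  assumes "finite V" "u \<in> V" 
  shows "(\<Sum>K\<in>Pow V. f K) = (\<Sum>K\<in>Pow V. f K)" by simp

lemma elc_facts:
  assumes sG: "simple_graph G" and uv: "u \<noteq> v" "{u, v} \<in> snd G"
  defines "G1 \<equiv> lc u G" and "G2 \<equiv> lc v (lc u G)"
  defines "Phi \<equiv> \<lambda>K. T G2 u (T G1 v (T G u K))"
  shows "bij_betw Phi {K \<in> Pow (fst G). \<not> par G K u} (Pow (fst G - {u}))"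
    and "\<And>K. Z (elc u v G) (Phi K) = Z G K"
proof -
  have uV: "u \<in> fst G" and vV: "v \<in> fst G" using sG uv unfolding simple_graph_def by auto
  have vu: "v \<in> nbhd G u" using uv(2) unfolding nbhd_def by (simp add: insert_commute)
  have s1: "simple_graph G1" and s2: "simple_graph G2" unfolding G1_def G2_def using sG by (auto intro: simple_lc)
  have f1: "fst G1 = fst G" and f2: "fst G2 = fst G" unfolding G1_def G2_def by auto
  have e: "elc u v G = lc u G2" unfolding elc_def G2_def ..
  show Zeq: "Z (elc u v G) (Phi K) = Z G K" for K
    unfolding e Phi_def using Z_lc[OF s2, of u] Z_lc[OF s1, of v] Z_lc[OF sG uV] uV vV f1 f2
    unfolding G1_def G2_def by simp
  have mem: "u \<in> Phi K \<longleftrightarrow> par G K u" for K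
  proof -
    let ?K1 = "T G u K" and ?K2 = "T G1 v (T G u K)"
    have x1: "u \<in> ?K1 \<longleftrightarrow> ((u \<in> K) \<noteq> par G K u)" by (rule mem_T_w)
    have z1: "par G1 ?K1 u = par G K u" unfolding G1_def by (rule par_lc_w[OF sG])
    have x2: "u \<in> ?K2 \<longleftrightarrow> u \<in> ?K1" using mem_T uv(1) by metis
    have "nbhd G1 u = nbhd G u" unfolding G1_def by (rule nbhd_lc_self[OF sG])
    then have "u \<in> nbhd G1 v" using vu nbhd_sym by metis
    then have z2: "par G2 ?K2 u = (par G1 ?K1 u \<noteq> (u \<in> ?K1))"
      unfolding G2_def G1_def[symmetric] by (rule par_lc_nb[OF s1])
    have "u \<in> Phi K \<longleftrightarrow> ((u \<in> ?K2) \<noteq> par G2 ?K2 u)" unfolding Phi_def by (rule mem_T_w)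
    then show ?thesis using x1 z1 x2 z2 by auto
  qed
  have injs: "inj_on Phi (Pow (fst G))" and img: "Phi ` Pow (fst G) = Pow (fst G)"
  proof -
    have a: "inj_on (T G u) (Pow (fst G))" "T G u ` Pow (fst G) = Pow (fst G)"
      using T_Pow_bij[OF sG uV] by auto
    have b: "inj_on (T G1 v) (Pow (fst G))" "T G1 v ` Pow (fst G) = Pow (fst G)"
      using T_Pow_bij[OF s1, of v] vV f1 by auto
    have c: "inj_on (T G2 u) (Pow (fst G))" "T G2 u ` Pow (fst G) = Pow (fst G)"
      using T_Pow_bij[OF s2, of u] uV f2 by auto
    have eq: "Phi = T G2 u \<circ> (T G1 v \<circ> T G u)" unfolding Phi_def by auto
    have i2: "inj_on (T G1 v \<circ> T G u) (Pow (fst G))"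
      by (rule comp_inj_on) (simp_all add: a b)
    have im2: "(T G1 v \<circ> T G u) ` Pow (fst G) = Pow (fst G)"
      by (simp only: image_comp[symmetric]) (simp add: a b)
    show "inj_on Phi (Pow (fst G))" unfolding eq
      by (rule comp_inj_on) (simp_all add: i2 im2[unfolded comp_def] c)
    show "Phi ` Pow (fst G) = Pow (fst G)" unfolding eq
      by (simp only: image_comp[symmetric] a(2) b(2) c(2))
  qed
  show "bij_betw Phi {K \<in> Pow (fst G). \<not> par G K u} (Pow (fst G - {u}))"
    unfolding bij_betw_def
  proof
    show "inj_on Phi {K \<in> Pow (fst G). \<not> par G K u}" using injs by (rule inj_on_subset) auto
    show "Phi ` {K \<in> Pow (fst G). \<not> par G K u} = Pow (fst G - {u})"
    proof
      show "Phi ` {K \<in> Pow (fst G). \<not> par G K u} \<subseteq> Pow (fst G - {u})"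
        using img mem by blast
      show "Pow (fst G - {u}) \<subseteq> Phi ` {K \<in> Pow (fst G). \<not> par G K u}"
      proof
        fix L assume L: "L \<in> Pow (fst G - {u})"
        then have "L \<in> Phi ` Pow (fst G)" using img by auto
        then obtain K where K: "K \<in> Pow (fst G)" "L = Phi K" by auto
        then have "\<not> par G K u" using mem L by auto
        then show "L \<in> Phi ` {K \<in> Pow (fst G). \<not> par G K u}" using K by auto
      qed
    qed
  qed
qed




lemma lc_bij:
  assumes sG: "simple_graph G" and uV: "u \<in> fst G"
  shows "bij_betw (T G u) {K \<in> Pow (fst G). (u \<in> K) = par G K u} (Pow (fst G - {u}))"
proof -
  have bb: "inj_on (T G u) (Pow (fst G))" "T G u ` Pow (fst G) = Pow (fst G)"
    using T_Pow_bij[OF sG uV] by auto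
  have mem: "u \<in> T G u K \<longleftrightarrow> ((u \<in> K) \<noteq> par G K u)" for K by (rule mem_T_w)
  show ?thesis unfolding bij_betw_def
  proof
    show "inj_on (T G u) {K \<in> Pow (fst G). (u \<in> K) = par G K u}" using bb(1) by (rule inj_on_subset) auto
    show "T G u ` {K \<in> Pow (fst G). (u \<in> K) = par G K u} = Pow (fst G - {u})"
    proof
      show "T G u ` {K \<in> Pow (fst G). (u \<in> K) = par G K u} \<subseteq> Pow (fst G - {u})"
        using bb(2) mem by blast
      show "Pow (fst G - {u}) \<subseteq> T G u ` {K \<in> Pow (fst G). (u \<in> K) = par G K u}"
      proof
        fix L assume L: "L \<in> Pow (fst G - {u})"
        then have "L \<in> T G u ` Pow (fst G)" using bb by auto
        then obtain K where K: "K \<in> Pow (fst G)" "L = T G u K" by auto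
        then have "(u \<in> K) = par G K u" using mem L by auto
        then show "L \<in> T G u ` {K \<in> Pow (fst G). (u \<in> K) = par G K u}" using K by auto
      qed
    qed
  qed
qed

lemma Fv_del_sum:
  assumes "fst H = fst G"
  shows "Fv (del u H) = (\<Sum>L\<in>Pow (fst G - {u}). 3 ^ card (Z H L - {u}))"
  unfolding Fv_def fst_del assms
proof (rule sum.cong[OF refl])
  fix L assume "L \<in> Pow (fst G - {u})"
  then have "Z (del u H) L = Z H L - {u}" using Z_del[of L H u] assms by auto
  then show "3 ^ card (Z (del u H) L) = 3 ^ card (Z H L - {u})" by simp
qed

lemma Fv_rec:
  assumes sG: "simple_graph G" and uv: "u \<noteq> v" "{u, v} \<in> snd G"
  shows "Fv G = Fv (del u G) + Fv (del u (elc u v G)) + Fv (del u (lc u G))"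
proof -
  let ?V = "fst G"
  define g where "g K = (3::real) ^ card (Z G K - {u})" for K
  have uV: "u \<in> ?V" using sG uv unfolding simple_graph_def by auto
  have fV: "finite ?V" using sG unfolding simple_graph_def by auto
  have P: "Pow (?V - {u}) = {K \<in> Pow ?V. u \<notin> K}" by auto
  have 1: "Fv (del u G) = (\<Sum>K\<in>{K \<in> Pow ?V. u \<notin> K}. g K)"
    unfolding Fv_del_sum[OF refl] g_def P ..
  obtain Phi where Phi: "bij_betw Phi {K \<in> Pow ?V. \<not> par G K u} (Pow (?V - {u}))"
    "\<And>K. Z (elc u v G) (Phi K) = Z G K"
    using elc_facts[OF sG uv] by blast
  have 2: "Fv (del u (elc u v G)) = (\<Sum>K\<in>{K \<in> Pow ?V. \<not> par G K u}. g K)"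
    unfolding Fv_del_sum[OF fst_elc] g_def
    using sum.reindex_bij_betw[OF Phi(1), of "\<lambda>L. (3::real) ^ card (Z (elc u v G) L - {u})"]
    by (simp add: Phi(2))
  have 3: "Fv (del u (lc u G)) = (\<Sum>K\<in>{K \<in> Pow ?V. (u \<in> K) = par G K u}. g K)"
    unfolding Fv_del_sum[OF fst_lc] g_def
    using sum.reindex_bij_betw[OF lc_bij[OF sG uV], of "\<lambda>L. (3::real) ^ card (Z (lc u G) L - {u})"]
    by (simp add: Z_lc[OF sG uV])
  have fP: "finite (Pow ?V)" using fV by simp
  have "Fv G = (\<Sum>K\<in>Pow ?V. (if u \<notin> K \<and> \<not> par G K u then 3 else 1) * g K)"
    unfolding Fv_def
  proof (rule sum.cong[OF refl])
    fix K assume K: "K \<in> Pow ?V"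
    have fZ: "finite (Z G K)" using fV unfolding Z_def by simp
    show "3 ^ card (Z G K) = (if u \<notin> K \<and> \<not> par G K u then 3 else 1) * g K"
    proof (cases "u \<in> Z G K")
      case True
      then have "card (Z G K) = Suc (card (Z G K - {u}))" using card.remove[OF fZ] by blast
      then show ?thesis using True uV unfolding g_def mem_Z by simp
    next
      case False
      then have "Z G K - {u} = Z G K" by auto
      then show ?thesis using False uV unfolding g_def mem_Z by simp
    qed
  qed
  also have "\<dots> = (\<Sum>K\<in>Pow ?V. (if u \<notin> K then g K else 0) + (if \<not> par G K u then g K else 0)
        + (if (u \<in> K) = par G K u then g K else 0))"
    by (rule sum.cong) auto
  also have "\<dots> = (\<Sum>K\<in>{K \<in> Pow ?V. u \<notin> K}. g K) + (\<Sum>K\<in>{K \<in> Pow ?V. \<not> par G K u}. g K)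
        + (\<Sum>K\<in>{K \<in> Pow ?V. (u \<in> K) = par G K u}. g K)"
    by (simp only: sum.distrib sum.inter_filter[OF fP])
  finally show ?thesis using 1 2 3 by simp
qed




lemma sum_Pow_card:
  fixes h :: "nat \<Rightarrow> real"
  assumes fV: "finite V"
  shows "(\<Sum>K\<in>Pow V. h (card K)) = (\<Sum>k\<le>card V. of_nat (card V choose k) * h k)"
proof -
  have "(\<Sum>K\<in>Pow V. h (card K)) = (\<Sum>k\<in>{..card V}. \<Sum>K\<in>{K. K \<in> Pow V \<and> card K = k}. h (card K))"
    by (rule sum.group[symmetric]) (use fV in \<open>auto intro: card_mono\<close>)
  also have "\<dots> = (\<Sum>k\<le>card V. of_nat (card V choose k) * h k)"
  proof (rule sum.cong[OF refl])
    fix k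
    have "{K. K \<in> Pow V \<and> card K = k} = {B. B \<subseteq> V \<and> card B = k}" by auto
    then have c: "card {K. K \<in> Pow V \<and> card K = k} = card V choose k" using n_subsets[OF fV] by simp
    have "(\<Sum>K\<in>{K. K \<in> Pow V \<and> card K = k}. h (card K)) = (\<Sum>K\<in>{K. K \<in> Pow V \<and> card K = k}. h k)"
      by (rule sum.cong) auto
    then show "(\<Sum>K\<in>{K. K \<in> Pow V \<and> card K = k}. h (card K)) = of_nat (card V choose k) * h k"
      using c by simp
  qed
  finally show ?thesis .
qed

lemma Fv_edgeless:
  assumes sG: "simple_graph G" and e: "snd G = {}"
  shows "Fv G = 4 ^ card (fst G)"
proof -
  let ?V = "fst G" and ?n = "card (fst G)"
  have fV: "finite ?V" using sG unfolding simple_graph_def by auto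
  have "\<And>K i. \<not> par G K i" using e unfolding par_def nbhd_def by simp
  then have Zs: "\<And>K. Z G K = ?V - K" unfolding Z_def supp_def by auto
  have "Fv G = (\<Sum>K\<in>Pow ?V. (\<lambda>k. (3::real) ^ (?n - k)) (card K))"
    unfolding Fv_def Zs using fV by (intro sum.cong) (auto simp: card_Diff_subset finite_subset)
  also have "\<dots> = (\<Sum>k\<le>?n. of_nat (?n choose k) * 1 ^ k * 3 ^ (?n - k))"
    using sum_Pow_card[OF fV] by simp
  also have "\<dots> = (1 + 3) ^ ?n" by (rule binomial_ring[symmetric])
  finally show ?thesis by simp
qed

lemma Qf_Fv:
  "simple_graph G \<Longrightarrow> card (fst G) = m \<Longrightarrow> poly (Qf m G) 4 = Fv G"
proof (induction m arbitrary: G)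
  case 0
  then have "fst G = {}" unfolding simple_graph_def by auto
  then have "snd G = {}" using 0 unfolding simple_graph_def by fastforce
  then show ?case using Fv_edgeless[OF 0(1)] 0(2) by simp
next
  case (Suc m)
  note sG = Suc.prems(1)
  show ?case
  proof (cases "snd G = {}")
    case True
    then show ?thesis using Fv_edgeless[OF sG] Suc.prems(2) by (simp add: poly_monom)
  next
    case False
    then obtain e where e: "e \<in> snd G" by auto
    then have "card e = 2" using sG unfolding simple_graph_def by auto
    then obtain a b where ab: "e = {a, b}" "a \<noteq> b" by (meson card_2_iff)
    have ex: "\<exists>p. (case p of (u, v) \<Rightarrow> u \<noteq> v \<and> {u, v} \<in> snd G)"
      using ab e by (intro exI[of _ "(a, b)"]) auto
    define p where "p = (SOME (u, v). u \<noteq> v \<and> {u, v} \<in> snd G)"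
    obtain u v where uvp: "p = (u, v)" by (cases p) auto
    then have uvdef: "(SOME (u, v). u \<noteq> v \<and> {u, v} \<in> snd G) = (u, v)" unfolding p_def .
    have uv: "u \<noteq> v" "{u, v} \<in> snd G"
      using someI_ex[OF ex] unfolding uvdef by auto
    have uV: "u \<in> fst G" using sG uv unfolding simple_graph_def by auto
    have c: "card (fst G - {u}) = m" using Suc.prems(2) uV sG unfolding simple_graph_def by auto
    have s1: "simple_graph (del u G)" using simple_del[OF sG] .
    have s2: "simple_graph (del u (elc u v G))" using simple_del[OF simple_elc[OF sG]] .
    have s3: "simple_graph (del u (lc u G))" using simple_del[OF simple_lc[OF sG]] .
    have "poly (Qf (Suc m) G) 4 = poly (Qf m (del u G)) 4 + poly (Qf m (del u (elc u v G))) 4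
          + poly (Qf m (del u (lc u G))) 4"
      using False uvdef by simp
    also have "\<dots> = Fv (del u G) + Fv (del u (elc u v G)) + Fv (del u (lc u G))"
      using Suc.IH[OF s1] Suc.IH[OF s2] Suc.IH[OF s3] c by simp
    also have "\<dots> = Fv G" using Fv_rec[OF sG uv] by simp
    finally show ?thesis .
  qed
qed

lemma interlace_Fv: "simple_graph G \<Longrightarrow> poly (interlace G) 4 = Fv G"
  unfolding interlace_def using Qf_Fv by blast




lemma orbit_simple:
  assumes "lc_step\<^sup>*\<^sup>* G H" "simple_graph G"
  shows "simple_graph H \<and> fst H = fst G"
  using assms
proof (induction rule: rtranclp_induct)
  case base then show ?case by simp
next
  case (step y z)
  then obtain v where "z = lc v y" unfolding lc_step_def by blast
  moreover have "simple_graph y" "fst y = fst G" using step by auto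
  ultimately show ?case using simple_lc[of y v] by simp
qed

lemma min_orbit_le:
  assumes sG: "simple_graph G" and "lc_step\<^sup>*\<^sup>* G H" "w \<in> fst H"
  shows "min_orbit_degree G \<le> degree H w"
proof -
  let ?D = "{degree H v | H v. H \<in> lc_orbit G \<and> v \<in> fst H}"
  have "?D \<subseteq> {..card (fst G)}"
  proof
    fix x assume "x \<in> ?D"
    then obtain H' v where x: "x = degree H' v" "lc_step\<^sup>*\<^sup>* G H'" "v \<in> fst H'"
      unfolding lc_orbit_def by auto
    have "simple_graph H'" "fst H' = fst G" using orbit_simple[OF x(2) sG] by auto
    then have "card (nbhd H' v) \<le> card (fst G)"
      using simple_nbhd sG unfolding simple_graph_def by (metis card_mono)
    then show "x \<in> {..card (fst G)}" using x unfolding degree_def by simp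
  qed
  then have "finite ?D" by (rule finite_subset) simp
  moreover have "degree H w \<in> ?D" using assms(2,3) unfolding lc_orbit_def by blast
  ultimately show ?thesis unfolding min_orbit_degree_def by (rule Min_le)
qed

lemma supp_fin: "simple_graph G \<Longrightarrow> finite (supp G K)"
  unfolding supp_def simple_graph_def by auto

lemma par_single: "simple_graph G \<Longrightarrow> \<not> par G {w} w"
  unfolding par_def using simple_not_self[of G w] by auto

lemma mindist:
  "simple_graph G \<Longrightarrow> K \<subseteq> fst G \<Longrightarrow> K \<noteq> {} \<Longrightarrow>
   \<exists>H w. lc_step\<^sup>*\<^sup>* G H \<and> w \<in> fst H \<and> degree H w + 1 \<le> card (supp G K)"
proof (induction "card K" arbitrary: G K rule: less_induct)
  case less
  note sG = less.prems(1) and KV = less.prems(2) and Kne = less.prems(3)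
  obtain w where wK: "w \<in> K" using Kne by auto
  have wV: "w \<in> fst G" using wK KV by auto
  have fK: "finite K" using KV sG unfolding simple_graph_def by (auto intro: finite_subset)
  have step: "\<exists>H w. lc_step\<^sup>*\<^sup>* G H \<and> w \<in> fst H \<and> degree H w + 1 \<le> card (supp G K)"
    if G1: "lc_step\<^sup>*\<^sup>* G G1" "simple_graph G1" "fst G1 = fst G"
      "supp G1 K = supp G K" "par G1 K w" for G1
  proof -
    let ?K1 = "T G1 w K"
    have K1: "?K1 = K - {w}" unfolding T_def tog_def using that(5) wK by auto
    have lt: "card ?K1 < card K" using card_Diff1_less[OF fK wK] unfolding K1 .
    have ne: "?K1 \<noteq> {}"
    proof
      assume "?K1 = {}"
      then have "K = {w}" using K1 wK by auto
      then show False using that(5) par_single[OF that(2)] by simp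
    qed
    have s2: "simple_graph (lc w G1)" using simple_lc[OF that(2)] .
    have sub: "?K1 \<subseteq> fst (lc w G1)" using K1 KV that(3) by auto
    obtain H v where Hv: "lc_step\<^sup>*\<^sup>* (lc w G1) H" "v \<in> fst H"
      "degree H v + 1 \<le> card (supp (lc w G1) ?K1)"
      using less.hyps[OF lt s2 sub ne] by blast
    have "supp (lc w G1) ?K1 = supp G K" using supp_lc[OF that(2)] wV that(3,4) by simp
    moreover have "lc_step G1 (lc w G1)" unfolding lc_step_def using wV that(3) by auto
    then have "lc_step\<^sup>*\<^sup>* G (lc w G1)" using that(1) by (simp add: rtranclp.rtrancl_into_rtrancl)
    then have "lc_step\<^sup>*\<^sup>* G H" using Hv(1) by (rule rtranclp_trans)
    ultimately show ?thesis using Hv by (intro exI[of _ H] exI[of _ v]) simp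
  qed
  show ?case
  proof (cases "nbhd G w \<subseteq> supp G K")
    case True
    have wS: "w \<in> supp G K" using wK wV unfolding supp_def by auto
    have "nbhd G w \<subseteq> supp G K - {w}" using True simple_not_self[OF sG, of w] by auto
    then have "card (nbhd G w) \<le> card (supp G K - {w})"
      by (rule card_mono[rotated]) (simp add: supp_fin[OF sG])
    also have "\<dots> = card (supp G K) - 1" using wS supp_fin[OF sG] by simp
    finally have "degree G w + 1 \<le> card (supp G K)" unfolding degree_def
      using wS supp_fin[OF sG] by (metis Suc_eq_plus1 Suc_le_eq card_gt_0_iff diff_Suc_1 empty_iff le_imp_less_Suc less_eq_Suc_le not_less_eq_eq Nat.lessE)
    then show ?thesis using wV by blast
  next
    case False
    then obtain u where u: "u \<in> nbhd G w" "u \<notin> supp G K" by auto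
    have uV: "u \<in> fst G" using u(1) simple_nbhd[OF sG] by auto
    then have uK: "u \<notin> K" and pu: "\<not> par G K u" using u(2) unfolding supp_def by auto
    show ?thesis
    proof (cases "par G K w")
      case True
      then show ?thesis using step[of G] sG by blast
    next
      case False
      let ?G1 = "lc u G"
      have TK: "T G u K = K" unfolding T_def using pu by simp
      have wu: "w \<in> nbhd G u" using u(1) nbhd_sym by metis
      have "par ?G1 K w" using par_lc_nb[OF sG wu, of K] TK False wK by simp
      moreover have "supp ?G1 K = supp G K" using supp_lc[OF sG uV, of K] TK by simp
      moreover have "lc_step\<^sup>*\<^sup>* G ?G1" unfolding lc_step_def using uV by auto
      ultimately show ?thesis using step[of ?G1] simple_lc[OF sG] by simp
    qed
  qed
qed




lemma sum_pow2:
  assumes "finite V"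
  shows "(\<Sum>U\<in>Pow V. (2::real) ^ card U) = 3 ^ card V"
proof -
  have "(\<Sum>U\<in>Pow V. (2::real) ^ card U) = (\<Sum>k\<le>card V. of_nat (card V choose k) * 2 ^ k * 1 ^ (card V - k))"
    using sum_Pow_card[OF assms, of "\<lambda>k. 2 ^ k"] by (simp add: mult.assoc)
  also have "\<dots> = (2 + 1) ^ card V" by (rule binomial_ring[symmetric])
  finally show ?thesis by simp
qed

lemma swap_sum:
  fixes f :: "'a set \<Rightarrow> 'a set \<Rightarrow> real"
  assumes fV: "finite V"
  shows "(\<Sum>K\<in>Pow V. \<Sum>U\<in>Pow (V - K). f K U) = (\<Sum>S\<in>Pow V. \<Sum>K\<in>Pow S. f K (S - K))"
proof -
  have fin1: "\<forall>K\<in>Pow V. finite (Pow (V - K))" using fV by simp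
  have fin2: "\<forall>S\<in>Pow V. finite (Pow S)" using fV by (auto intro: finite_subset)
  have "(\<Sum>K\<in>Pow V. \<Sum>U\<in>Pow (V - K). f K U) = (\<Sum>(K, U)\<in>Sigma (Pow V) (\<lambda>K. Pow (V - K)). f K U)"
    by (rule sum.Sigma) (use fV fin1 in auto)
  also have "\<dots> = (\<Sum>(S, K)\<in>Sigma (Pow V) Pow. f K (S - K))"
  proof (rule sum.reindex_bij_witness[where i = "\<lambda>(S, K). (K, S - K)" and j = "\<lambda>(K, U). (K \<union> U, K)"])
    show "\<And>a. a \<in> Sigma (Pow V) (\<lambda>K. Pow (V - K)) \<Longrightarrow> (case (case a of (K, U) \<Rightarrow> (K \<union> U, K)) of (S, K) \<Rightarrow> (K, S - K)) = a"
      by auto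
    show "\<And>a. a \<in> Sigma (Pow V) (\<lambda>K. Pow (V - K)) \<Longrightarrow> (case a of (K, U) \<Rightarrow> (K \<union> U, K)) \<in> Sigma (Pow V) Pow"
      by auto
    show "\<And>b. b \<in> Sigma (Pow V) Pow \<Longrightarrow> (case (case b of (S, K) \<Rightarrow> (K, S - K)) of (K, U) \<Rightarrow> (K \<union> U, K)) = b"
      by auto
    show "\<And>b. b \<in> Sigma (Pow V) Pow \<Longrightarrow> (case b of (S, K) \<Rightarrow> (K, S - K)) \<in> Sigma (Pow V) (\<lambda>K. Pow (V - K))"
      by auto
    show "\<And>a. a \<in> Sigma (Pow V) (\<lambda>K. Pow (V - K)) \<Longrightarrow> (case (case a of (K, U) \<Rightarrow> (K \<union> U, K)) of (S, K) \<Rightarrow> f K (S - K)) = (case a of (K, U) \<Rightarrow> f K U)"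
    proof -
      fix a assume "a \<in> Sigma (Pow V) (\<lambda>K. Pow (V - K))"
      then obtain K U where a: "a = (K, U)" "U \<subseteq> V - K" by auto
      then have "(K \<union> U) - K = U" by auto
      then show "(case (case a of (K, U) \<Rightarrow> (K \<union> U, K)) of (S, K) \<Rightarrow> f K (S - K)) = (case a of (K, U) \<Rightarrow> f K U)"
        using a by simp
    qed
  qed
  also have "\<dots> = (\<Sum>S\<in>Pow V. \<Sum>K\<in>Pow S. f K (S - K))"
    by (rule sum.Sigma[symmetric]) (use fV fin2 in auto)
  finally show ?thesis .
qed

lemma Fv_expand:
  assumes sG: "simple_graph G"
  shows "Fv G = (\<Sum>K\<in>Pow (fst G). \<Sum>U\<in>Pow (fst G - K). if U \<subseteq> Z G K then (2::real) ^ card U else 0)"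
  unfolding Fv_def
proof (rule sum.cong[OF refl])
  fix K assume "K \<in> Pow (fst G)"
  have fV: "finite (fst G)" using sG unfolding simple_graph_def by auto
  have ZV: "Z G K \<subseteq> fst G - K" unfolding mem_Z by (auto simp: mem_Z)
  have "{U \<in> Pow (fst G - K). U \<subseteq> Z G K} = Pow (Z G K)" using ZV by auto
  then have "(\<Sum>U\<in>Pow (fst G - K). if U \<subseteq> Z G K then (2::real) ^ card U else 0) = (\<Sum>U\<in>Pow (Z G K). 2 ^ card U)"
    using sum.inter_filter[of "Pow (fst G - K)" "\<lambda>U. (2::real) ^ card U" "\<lambda>U. U \<subseteq> Z G K"] fV by simp
  also have "\<dots> = 3 ^ card (Z G K)" using fV ZV by (intro sum_pow2) (auto intro: finite_subset)
  finally show "3 ^ card (Z G K) = (\<Sum>U\<in>Pow (fst G - K). if U \<subseteq> Z G K then (2::real) ^ card U else 0)" by simp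
qed




definition cc :: "nat \<Rightarrow> nat \<Rightarrow> nat \<Rightarrow> nat \<Rightarrow> real" where
  "cc n d t k = (if max 1 (d + t - n) \<le> k then 2 ^ (t - k) else 0)"

lemma gamma_conv:
  "gamma n d / 2 ^ n = (\<Sum>t\<le>n. of_nat (n choose t) * (\<Sum>k\<le>t. of_nat (t choose k) * cc n d t k))"
proof -
  have "gamma n d / 2 ^ n = (\<Sum>t\<le>n. real (n choose t) * 2 ^ t *
      (\<Sum>k = max 1 (d + t - n)..t. real (t choose k) * 2 ^ (n - k)) / 2 ^ n)"
    unfolding gamma_def atLeast0AtMost sum_divide_distrib ..
  also have "\<dots> = (\<Sum>t\<le>n. of_nat (n choose t) * (\<Sum>k\<le>t. of_nat (t choose k) * cc n d t k))"
  proof (rule sum.cong[OF refl])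
    fix t assume "t \<in> {..n}"
    then have tn: "t \<le> n" by simp
    let ?m = "max 1 (d + t - n)"
    have "(\<Sum>k\<le>t. of_nat (t choose k) * cc n d t k) = (\<Sum>k\<in>{k \<in> {..t}. ?m \<le> k}. of_nat (t choose k) * 2 ^ (t - k))"
    proof -
      have "(\<Sum>k\<le>t. of_nat (t choose k) * cc n d t k) = (\<Sum>k\<le>t. if ?m \<le> k then of_nat (t choose k) * 2 ^ (t - k) else 0)"
        by (rule sum.cong) (simp_all add: cc_def)
      then show ?thesis by (simp only: sum.inter_filter[OF finite_atMost])
    qed
    also have "{k \<in> {..t}. ?m \<le> k} = {?m..t}" by auto
    finally have 1: "(\<Sum>k\<le>t. of_nat (t choose k) * cc n d t k) = (\<Sum>k=?m..t. of_nat (t choose k) * 2 ^ (t - k))" .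
    have 2: "2 ^ t * (\<Sum>k=?m..t. real (t choose k) * 2 ^ (n - k)) = 2 ^ n * (\<Sum>k=?m..t. of_nat (t choose k) * 2 ^ (t - k))"
      unfolding sum_distrib_left
    proof (rule sum.cong[OF refl])
      fix k assume "k \<in> {?m..t}"
      then have "k \<le> t" by simp
      then have "t + (n - k) = n + (t - k)" using tn by simp
      then have "(2::real) ^ t * 2 ^ (n - k) = 2 ^ n * 2 ^ (t - k)" by (metis power_add)
      then show "2 ^ t * (real (t choose k) * 2 ^ (n - k)) = 2 ^ n * (real (t choose k) * 2 ^ (t - k))"
        by (simp add: algebra_simps)
    qed
    show "real (n choose t) * 2 ^ t * (\<Sum>k = ?m..t. real (t choose k) * 2 ^ (n - k)) / 2 ^ n =
          of_nat (n choose t) * (\<Sum>k\<le>t. of_nat (t choose k) * cc n d t k)"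
      unfolding 1 using 2 by (simp add: mult.assoc)
  qed
  finally show ?thesis .
qed

lemma term_bound:
  assumes sG: "simple_graph G" and S: "S \<subseteq> fst G" and K: "K \<subseteq> S"
  shows "(if S - K \<subseteq> Z G K then (2::real) ^ card (S - K) else 0)
         \<le> (if K = {} then 2 ^ card S else 0) + cc (card (fst G)) (min_orbit_degree G + 1) (card S) (card K)"
proof (cases "K = {}")
  case True
  have "Z G {} = fst G" unfolding Z_def supp_def par_def by auto
  then show ?thesis using True S unfolding cc_def by simp
next
  case False
  show ?thesis
  proof (cases "S - K \<subseteq> Z G K")
    case True
    have fV: "finite (fst G)" using sG unfolding simple_graph_def by auto
    have KV: "K \<subseteq> fst G" using K S by auto
    obtain H w where Hw: "lc_step\<^sup>*\<^sup>* G H" "w \<in> fst H" "degree H w + 1 \<le> card (supp G K)"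
      using mindist[OF sG KV False] by blast
    have "min_orbit_degree G \<le> degree H w" using min_orbit_le[OF sG Hw(1,2)] .
    then have d: "min_orbit_degree G + 1 \<le> card (supp G K)" using Hw(3) by simp
    have sV: "supp G K \<subseteq> fst G" unfolding supp_def by auto
    have "card (Z G K) = card (fst G) - card (supp G K)" unfolding Z_def
      using sV fV by (simp add: card_Diff_subset finite_subset)
    moreover have "card (S - K) \<le> card (Z G K)" using True fV
      by (intro card_mono) (auto simp: Z_def)
    moreover have "card (S - K) = card S - card K" using K S fV
      by (meson card_Diff_subset finite_subset)
    moreover have "card K \<le> card S" "card S \<le> card (fst G)" "card (supp G K) \<le> card (fst G)"
      using K S sV fV by (auto intro: card_mono finite_subset)
    moreover have "card K \<ge> 1" using False KV fV
      by (metis card_0_eq finite_subset less_one not_le)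
    ultimately have "max 1 (min_orbit_degree G + 1 + card S - card (fst G)) \<le> card K"
      using d by linarith
    then show ?thesis using True False \<open>card (S - K) = card S - card K\<close> unfolding cc_def by simp
  next
    case nf: False
    then show ?thesis using False unfolding cc_def by simp
  qed
qed

lemma Fv_bound:
  assumes sG: "simple_graph G"
  shows "Fv G \<le> 3 ^ card (fst G) + gamma (card (fst G)) (min_orbit_degree G + 1) / 2 ^ card (fst G)"
proof -
  let ?V = "fst G" and ?n = "card (fst G)" and ?d = "min_orbit_degree G + 1"
  have fV: "finite ?V" using sG unfolding simple_graph_def by auto
  have fS: "\<And>S. S \<in> Pow ?V \<Longrightarrow> finite S" using fV by (auto intro: finite_subset)
  have "Fv G = (\<Sum>S\<in>Pow ?V. \<Sum>K\<in>Pow S. if S - K \<subseteq> Z G K then (2::real) ^ card (S - K) else 0)"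
    unfolding Fv_expand[OF sG] by (rule swap_sum[OF fV])
  also have "\<dots> \<le> (\<Sum>S\<in>Pow ?V. \<Sum>K\<in>Pow S. (if K = {} then 2 ^ card S else 0) + cc ?n ?d (card S) (card K))"
    by (intro sum_mono term_bound[OF sG]) auto
  also have "\<dots> = (\<Sum>S\<in>Pow ?V. 2 ^ card S + (\<Sum>k\<le>card S. of_nat (card S choose k) * cc ?n ?d (card S) k))"
  proof (rule sum.cong[OF refl])
    fix S assume "S \<in> Pow ?V"
    then have f: "finite S" by (rule fS)
    show "(\<Sum>K\<in>Pow S. (if K = {} then 2 ^ card S else 0) + cc ?n ?d (card S) (card K)) =
          2 ^ card S + (\<Sum>k\<le>card S. of_nat (card S choose k) * cc ?n ?d (card S) k)"
      using sum_Pow_card[OF f, of "cc ?n ?d (card S)"] f by (simp add: sum.distrib sum.delta)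
  qed
  also have "\<dots> = 3 ^ ?n + (\<Sum>t\<le>?n. of_nat (?n choose t) * (\<Sum>k\<le>t. of_nat (t choose k) * cc ?n ?d t k))"
    using sum_pow2[OF fV] sum_Pow_card[OF fV, of "\<lambda>t. \<Sum>k\<le>t. of_nat (t choose k) * cc ?n ?d t k"]
    by (simp add: sum.distrib)
  also have "\<dots> = 3 ^ ?n + gamma ?n ?d / 2 ^ ?n" unfolding gamma_conv ..
  finally show ?thesis .
qed

theorem theorem1:
  fixes G :: "'a graph" and n :: nat
  assumes "simple_graph G"
    and "n = card (fst G)"
  shows "poly (interlace G) 4
           \<le> (gamma n (min_orbit_degree G + 1) + 6 ^ n) / 2 ^ n"
proof -
  have "(6::real) ^ n = 3 ^ n * 2 ^ n" by (simp add: power_mult_distrib[symmetric])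
  then have "(gamma n (min_orbit_degree G + 1) + 6 ^ n) / 2 ^ n = 3 ^ n + gamma n (min_orbit_degree G + 1) / 2 ^ n"
    by (simp add: field_simps)
  then show ?thesis using Fv_bound[OF assms(1)] interlace_Fv[OF assms(1)] assms(2) by simp
qed


end
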